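(* Let $(M,\cdot,1)$ be a monoid, $\Sigma$ a finite alphabet and $L$ the set of all functions $\Sigma^*\to M$. Let $(g'_1,f'_1),\dots,(g'_n,f'_n)$, $n\ge0$, be factorizations on $L$ and let $r_1,\dots,r_n:\Sigma^*\to\Sigma^*$ be functions (word-transformations). For each $i$ put $(g_i,f_i)=(g'_i\circ\Delta_{r_i},\,f'_i\circ\Delta_{r_i})$. Let $(g,f)=(g_1,f_1)\ast\cdots\ast(g_n,f_n)$, i.e. $$g=\prod_{i=1}^n g_i\circ(f_{i-1}\circ\cdots\circ f_1),\qquad f=f_n\circ\cdots\circ f_1$$ (product taken in the order $i=1,\dots,n$). Then for every $\ell\in L$, $$g(\ell)\cdot f(\ell)=\Delta_{r_1\circ r_2\circ\cdots\circ r_n}(\ell)=\ell\circ r_1\circ r_2\circ\cdots\circ r_n,$$ where for $n=0$ the composite word-transformation is the identity (so the right side is $\ell$).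
   Context: Let $F$ be the set of functions $L\to L$ and $G$ the set of functions $L\to M$; for $g,g'\in G$, $(g\cdot g')(\ell)=g(\ell)\cdot g'(\ell)$, and an empty product in $G$ is the constant function $1$, an empty composition in $F$ is the identity. A factorization on $L$ is a pair $(g,f)\in G\times F$ with $g(\ell)\cdot f(\ell)=\ell$ for all $\ell\in L$. For a word-transformation $r:\Sigma^*\to\Sigma^*$, $\Delta_r\in F$ is defined by $\Delta_r(\ell)=\ell\circ r$. The operation $\ast$ on $G\times F$ is $(g_1,f_1)\ast(g_2,f_2)=(g_1\cdot(g_2\circ f_1),f_2\circ f_1)$. For $m\in M$ and $\ell\in L$, $m\cdot\ell$ is the $M$-language $\gamma\mapsto m\cdot\ell(\gamma)$. *)

theory Defs
  imports Main
begin

type_synonym ('a, 'm) lang = "'a list \<Rightarrow> 'm"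

definition lscale :: "'m::monoid_mult \<Rightarrow> ('a, 'm) lang \<Rightarrow> ('a, 'm) lang" where
  "lscale m l = (\<lambda>w. m * l w)"

definition Delta :: "('a list \<Rightarrow> 'a list) \<Rightarrow> ('a, 'm) lang \<Rightarrow> ('a, 'm) lang" where
  "Delta r l = l \<circ> r"

definition factorization ::
  "((('a, 'm::monoid_mult) lang \<Rightarrow> 'm) \<times> (('a, 'm) lang \<Rightarrow> ('a, 'm) lang)) \<Rightarrow> bool" where
  "factorization gf \<longleftrightarrow> (\<forall>l. lscale (fst gf l) (snd gf l) = l)"

definition star ::
  "((('a, 'm::monoid_mult) lang \<Rightarrow> 'm) \<times> (('a, 'm) lang \<Rightarrow> ('a, 'm) lang))
   \<Rightarrow> ((('a, 'm) lang \<Rightarrow> 'm) \<times> (('a, 'm) lang \<Rightarrow> ('a, 'm) lang))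
   \<Rightarrow> ((('a, 'm) lang \<Rightarrow> 'm) \<times> (('a, 'm) lang \<Rightarrow> ('a, 'm) lang))" where
  "star p q = (\<lambda>l. fst p l * fst q (snd p l), snd q \<circ> snd p)"

definition star_list ::
  "((('a, 'm::monoid_mult) lang \<Rightarrow> 'm) \<times> (('a, 'm) lang \<Rightarrow> ('a, 'm) lang)) list
   \<Rightarrow> ((('a, 'm) lang \<Rightarrow> 'm) \<times> (('a, 'm) lang \<Rightarrow> ('a, 'm) lang))" where
  "star_list ps = foldr star ps (\<lambda>_. 1, id)"

end

theory Submission
  imports Defs
begin

lemma lscale_mult: "lscale (a * b) h = lscale a (lscale b h)"
  by (simp add: lscale_def mult.assoc)

lemma lscale_comp: "lscale a (h \<circ> R) = lscale a h \<circ> R"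
  by (simp add: lscale_def o_def)

lemma main_aux:
  fixes facs :: "((('a, 'm::monoid_mult) lang \<Rightarrow> 'm) \<times> (('a, 'm) lang \<Rightarrow> ('a, 'm) lang)) list"
  assumes "length rs = length facs"
    and "\<forall>p \<in> set facs. factorization p"
  shows "lscale (fst (star_list (map2 (\<lambda>(g', f') r. (g' \<circ> Delta r, f' \<circ> Delta r)) facs rs)) l)
           (snd (star_list (map2 (\<lambda>(g', f') r. (g' \<circ> Delta r, f' \<circ> Delta r)) facs rs)) l)
         = Delta (foldr (\<circ>) rs id) l"
  using assms
proof (induction facs arbitrary: rs l)
  case Nil
  then show ?case by (simp add: star_list_def lscale_def Delta_def)
next
  case (Cons p facs)
  obtain r rs' where rs: "rs = r # rs'" using Cons.prems(1) by (cases rs) auto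
  obtain g' f' where p: "p = (g', f')" by (cases p)
  have fac: "lscale (g' k) (f' k) = k" for k
    using Cons.prems(2) p by (simp add: factorization_def)
  define ps where "ps = map2 (\<lambda>(g', f') r. (g' \<circ> Delta r, f' \<circ> Delta r)) facs rs'"
  have IH: "lscale (fst (star_list ps) k) (snd (star_list ps) k) = Delta (foldr (\<circ>) rs' id) k" for k
    proof -
    have a: "length rs' = length facs" using Cons.prems(1) rs by simp
    have b: "\<forall>p \<in> set facs. factorization p" using Cons.prems(2) by simp
    show ?thesis unfolding ps_def by (rule Cons.IH[OF a b])
  qed
  have sl: "star_list (x # ps) = star x (star_list ps)" for x
    by (simp add: star_list_def)
  let ?k = "f' (Delta r l)"
  have "lscale (g' (Delta r l) * fst (star_list ps) ?k) (snd (star_list ps) ?k)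
        = lscale (g' (Delta r l)) (Delta (foldr (\<circ>) rs' id) ?k)"
    by (simp add: lscale_mult IH)
  also have "\<dots> = Delta (foldr (\<circ>) rs' id) (lscale (g' (Delta r l)) ?k)"
    by (simp add: Delta_def lscale_comp)
  also have "\<dots> = Delta (r \<circ> foldr (\<circ>) rs' id) l"
    by (simp add: fac Delta_def o_assoc)
  finally have *: "lscale (fst (star_list ((g' \<circ> Delta r, f' \<circ> Delta r) # ps)) l)
     (snd (star_list ((g' \<circ> Delta r, f' \<circ> Delta r) # ps)) l) = Delta (r \<circ> foldr (\<circ>) rs' id) l"
    unfolding sl star_def by simp
  have e: "map2 (\<lambda>(g', f') r. (g' \<circ> Delta r, f' \<circ> Delta r)) (p # facs) rs
        = (g' \<circ> Delta r, f' \<circ> Delta r) # ps"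
    unfolding ps_def rs p by simp
  have f: "foldr (\<circ>) rs id = r \<circ> foldr (\<circ>) rs' id" by (simp add: rs)
  show ?case unfolding e f by (rule *)
qed

theorem lemma2:
  fixes facs :: "(((('a::finite), 'm::monoid_mult) lang \<Rightarrow> 'm) \<times> (('a, 'm) lang \<Rightarrow> ('a, 'm) lang)) list"
    and rs :: "('a list \<Rightarrow> 'a list) list"
  assumes "length rs = length facs"
    and "\<forall>p \<in> set facs. factorization p"
  shows "\<forall>l. (let gf = star_list (map2 (\<lambda>(g', f') r. (g' \<circ> Delta r, f' \<circ> Delta r)) facs rs)
              in lscale (fst gf l) (snd gf l) = Delta (foldr (\<circ>) rs id) l)"
  using main_aux[OF assms] by (simp add: Let_def)

end
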